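(* Let $\mathbb F\in\{\mathbb R,\mathbb C\}$ and let $\hat U,\tilde U:(0,1]\to GL_n(\mathbb F)$ be continuous, with every entry of $\hat U_\varepsilon$ and of $\tilde U_\varepsilon$ given, for $\varepsilon$ in some interval $(0,\delta)$, by a convergent Laurent series in $\varepsilon$ with finitely many negative powers. Suppose $\hat U$ contracts the Lie algebra $\mathfrak g$ to the algebra $\hat{\mathfrak g}$ and $\tilde U$ contracts $\hat{\mathfrak g}$ to the algebra $\tilde{\mathfrak g}$. Then there exists a positive integer $\nu$ such that $\check U_\varepsilon=\hat U_{\varepsilon^\nu}\tilde U_\varepsilon$ contracts $\mathfrak g$ to $\tilde{\mathfrak g}$.
   Context: All algebras are structures on the same $n$-dimensional space, given by structure constants in a fixed basis. A continuous $U:(0,1]\to GL_n(\mathbb F)$ contracts the algebra with structure constants $c^k_{ij}$ to the algebra with structure constants $c'^{k'}_{i'j'}$ if $\lim_{\varepsilon\to0^+}(U_\varepsilon)^i_{i'}(U_\varepsilon)^j_{j'}(U^{-1}_\varepsilon)^{k'}_kc^k_{ij}=c'^{k'}_{i'j'}$ for all indices (summation over repeated indices). *)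

theory Defs
  imports "HOL-Analysis.Analysis"
begin

text \<open>Structure constants: c i j k stands for c^k_{ij}, i.e. [e_i, e_j] = sum_k c^k_{ij} e_k.
  Matrix entries: (U)^i_{i'} is U $ i $ i' (row i, column i').\<close>

definition is_lie_structure :: "('n::finite \<Rightarrow> 'n \<Rightarrow> 'n \<Rightarrow> 'a::field) \<Rightarrow> bool" where
  "is_lie_structure c \<longleftrightarrow>
     (\<forall>i j k. c i j k = - c j i k) \<and>
     (\<forall>i j k m. (\<Sum>l\<in>UNIV. c i j l * c l k m + c j k l * c l i m + c k i l * c l j m) = 0)"

definition GL_path :: "(real \<Rightarrow> 'a::real_normed_field ^'n::finite^'n) \<Rightarrow> bool" where
  "GL_path U \<longleftrightarrow> continuous_on {0<..1} U \<and> (\<forall>\<epsilon>\<in>{0<..1}. invertible (U \<epsilon>))"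

definition laurent_entries :: "(real \<Rightarrow> 'a::real_normed_field ^'n::finite^'n) \<Rightarrow> bool" where
  "laurent_entries U \<longleftrightarrow>
     (\<exists>\<delta>>0. \<forall>i j. \<exists>(N::nat) (a::nat \<Rightarrow> 'a). \<forall>\<epsilon>\<in>{0<..<\<delta>}.
        summable (\<lambda>m. a m * of_real \<epsilon> ^ m) \<and>
        U \<epsilon> $ i $ j = (\<Sum>m. a m * of_real \<epsilon> ^ m) / of_real \<epsilon> ^ N)"

definition contracts ::
  "(real \<Rightarrow> 'a::real_normed_field ^'n::finite^'n) \<Rightarrow> ('n \<Rightarrow> 'n \<Rightarrow> 'n \<Rightarrow> 'a) \<Rightarrow> ('n \<Rightarrow> 'n \<Rightarrow> 'n \<Rightarrow> 'a) \<Rightarrow> bool" where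
  "contracts U c c' \<longleftrightarrow>
     (\<forall>i' j' k'. ((\<lambda>\<epsilon>. \<Sum>i\<in>UNIV. \<Sum>j\<in>UNIV. \<Sum>k\<in>UNIV.
         U \<epsilon> $ i $ i' * U \<epsilon> $ j $ j' * matrix_inv (U \<epsilon>) $ k' $ k * c i j k)
       \<longlongrightarrow> c' i' j' k') (at_right 0))"

end

theory Submission
  imports Defs
begin


definition psf :: "real \<Rightarrow> (real \<Rightarrow> 'a::{real_normed_field,banach}) \<Rightarrow> bool" where
  "psf r f \<longleftrightarrow> (\<exists>a. \<forall>x. \<bar>x\<bar> < r \<longrightarrow> summable (\<lambda>m. norm (a m) * \<bar>x\<bar> ^ m) \<and>
       (\<lambda>m. a m * of_real x ^ m) sums f x)"

lemma psf_mono: "psf r f \<Longrightarrow> r' \<le> r \<Longrightarrow> psf r' f"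
  unfolding psf_def by force

lemma psf_monom: "psf r (\<lambda>x. c * of_real x ^ k)"
proof -
  have "\<forall>x. \<bar>x\<bar> < r \<longrightarrow> summable (\<lambda>m. norm (if m = k then c else 0) * \<bar>x\<bar> ^ m) \<and>
       (\<lambda>m. (if m = k then c else 0) * of_real x ^ m) sums (c * of_real x ^ k)"
  proof (intro allI impI conjI)
    fix x :: real
    have "(\<lambda>m. norm (if m = k then c else 0) * \<bar>x\<bar> ^ m) = (\<lambda>m. if m = k then norm c * \<bar>x\<bar> ^ m else 0)"
      by auto
    then show "summable (\<lambda>m. norm (if m = k then c else 0) * \<bar>x\<bar> ^ m)" by simp
    have "(\<lambda>m. (if m = k then c else 0) * (of_real x::'a) ^ m) = (\<lambda>m. if m = k then c * of_real x ^ m else 0)"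
      by auto
    then show "(\<lambda>m. (if m = k then c else 0) * (of_real x::'a) ^ m) sums (c * of_real x ^ k)"
      using sums_single[of k "\<lambda>m. c * (of_real x::'a) ^ m"] by simp
  qed
  then show ?thesis unfolding psf_def by (intro exI[where x="\<lambda>m. if m = k then c else 0"]) simp
qed

lemma psf_const: "psf r (\<lambda>x. c)"
  using psf_monom[of r c 0] by simp

lemma psf_add: assumes "psf r f" "psf r g" shows "psf r (\<lambda>x. f x + g x)"
proof -
  obtain a where a: "\<forall>x. \<bar>x\<bar> < r \<longrightarrow> summable (\<lambda>m. norm (a m) * \<bar>x\<bar> ^ m) \<and>
       (\<lambda>m. a m * of_real x ^ m) sums f x" using assms(1) unfolding psf_def by blast
  obtain b where b: "\<forall>x. \<bar>x\<bar> < r \<longrightarrow> summable (\<lambda>m. norm (b m) * \<bar>x\<bar> ^ m) \<and>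
       (\<lambda>m. b m * of_real x ^ m) sums g x" using assms(2) unfolding psf_def by blast
  have "\<forall>x. \<bar>x\<bar> < r \<longrightarrow> summable (\<lambda>m. norm (a m + b m) * \<bar>x\<bar> ^ m) \<and>
       (\<lambda>m. (a m + b m) * of_real x ^ m) sums (f x + g x)"
  proof (intro allI impI conjI)
    fix x assume x: "\<bar>x\<bar> < r"
    show "summable (\<lambda>m. norm (a m + b m) * \<bar>x\<bar> ^ m)"
    proof (rule summable_comparison_test[OF _ summable_add[OF conjunct1[OF a[rule_format, OF x]] conjunct1[OF b[rule_format, OF x]]]])
      show "\<exists>N. \<forall>n\<ge>N. norm (norm (a n + b n) * \<bar>x\<bar> ^ n) \<le> norm (a n) * \<bar>x\<bar> ^ n + norm (b n) * \<bar>x\<bar> ^ n"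
        by (auto simp: abs_mult distrib_right[symmetric] intro!: mult_right_mono norm_triangle_ineq)
    qed
    show "(\<lambda>m. (a m + b m) * of_real x ^ m) sums (f x + g x)"
      using sums_add[OF conjunct2[OF a[rule_format, OF x]] conjunct2[OF b[rule_format, OF x]]]
      by (simp add: distrib_right)
  qed
  then show ?thesis unfolding psf_def by (intro exI[where x="\<lambda>m. a m + b m"]) simp
qed

lemma psf_mult: assumes "psf r f" "psf r g" shows "psf r (\<lambda>x. f x * g x)"
proof -
  obtain a where a: "\<forall>x. \<bar>x\<bar> < r \<longrightarrow> summable (\<lambda>m. norm (a m) * \<bar>x\<bar> ^ m) \<and>
       (\<lambda>m. a m * of_real x ^ m) sums f x" using assms(1) unfolding psf_def by blast
  obtain b where b: "\<forall>x. \<bar>x\<bar> < r \<longrightarrow> summable (\<lambda>m. norm (b m) * \<bar>x\<bar> ^ m) \<and>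
       (\<lambda>m. b m * of_real x ^ m) sums g x" using assms(2) unfolding psf_def by blast
  define c where "c k = (\<Sum>i\<le>k. a i * b (k - i))" for k
  have "\<forall>x. \<bar>x\<bar> < r \<longrightarrow> summable (\<lambda>m. norm (c m) * \<bar>x\<bar> ^ m) \<and>
       (\<lambda>m. c m * of_real x ^ m) sums (f x * g x)"
  proof (intro allI impI conjI)
    fix x assume x: "\<bar>x\<bar> < r"
    have sa: "summable (\<lambda>m. norm (a m) * \<bar>x\<bar> ^ m)" and fa: "(\<lambda>m. a m * of_real x ^ m) sums f x"
      using a x by auto
    have sb: "summable (\<lambda>m. norm (b m) * \<bar>x\<bar> ^ m)" and fb: "(\<lambda>m. b m * of_real x ^ m) sums g x"
      using b x by auto
    have na: "summable (\<lambda>m. norm (norm (a m) * \<bar>x\<bar> ^ m))" using sa by (simp add: abs_mult)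
    have nb: "summable (\<lambda>m. norm (norm (b m) * \<bar>x\<bar> ^ m))" using sb by (simp add: abs_mult)
    have S: "summable (\<lambda>k. \<Sum>i\<le>k. (norm (a i) * \<bar>x\<bar> ^ i) * (norm (b (k - i)) * \<bar>x\<bar> ^ (k - i)))"
      by (rule summable_Cauchy_product[OF na nb])
    show "summable (\<lambda>m. norm (c m) * \<bar>x\<bar> ^ m)"
    proof (rule summable_comparison_test[OF _ S], intro exI allI impI)
      fix k :: nat
      have "norm (norm (c k) * \<bar>x\<bar> ^ k) = norm (c k) * \<bar>x\<bar> ^ k" by (simp add: abs_mult)
      also have "\<dots> \<le> (\<Sum>i\<le>k. norm (a i * b (k - i))) * \<bar>x\<bar> ^ k"
        unfolding c_def by (intro mult_right_mono norm_sum) auto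
      also have "\<dots> = (\<Sum>i\<le>k. (norm (a i) * \<bar>x\<bar> ^ i) * (norm (b (k - i)) * \<bar>x\<bar> ^ (k - i)))"
        unfolding sum_distrib_right
        by (intro sum.cong refl) (simp add: norm_mult mult_ac power_add[symmetric])
      finally show "norm (norm (c k) * \<bar>x\<bar> ^ k) \<le> (\<Sum>i\<le>k. (norm (a i) * \<bar>x\<bar> ^ i) * (norm (b (k - i)) * \<bar>x\<bar> ^ (k - i)))" .
    qed
    have na': "summable (\<lambda>m. norm (a m * of_real x ^ m))" using sa by (simp add: norm_mult norm_power)
    have nb': "summable (\<lambda>m. norm (b m * of_real x ^ m))" using sb by (simp add: norm_mult norm_power)
    have "(\<lambda>k. \<Sum>i\<le>k. (a i * of_real x ^ i) * (b (k - i) * of_real x ^ (k - i))) sums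
          ((\<Sum>k. a k * of_real x ^ k) * (\<Sum>k. b k * of_real x ^ k))"
      by (rule Cauchy_product_sums[OF na' nb'])
    moreover have "(\<lambda>k. \<Sum>i\<le>k. (a i * of_real x ^ i) * (b (k - i) * of_real x ^ (k - i))) = (\<lambda>k. c k * of_real x ^ k)"
      unfolding c_def sum_distrib_right
      by (intro ext sum.cong refl) (simp add: mult_ac power_add[symmetric])
    ultimately show "(\<lambda>m. c m * of_real x ^ m) sums (f x * g x)"
      using fa fb by (simp add: sums_iff)
  qed
  then show ?thesis unfolding psf_def by (intro exI[where x=c]) simp
qed

lemma psf_sum: "finite S \<Longrightarrow> (\<And>i. i \<in> S \<Longrightarrow> psf r (f i)) \<Longrightarrow> psf r (\<lambda>x. \<Sum>i\<in>S. f i x)"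
proof (induction S rule: finite_induct)
  case empty then show ?case using psf_const[of r 0] by simp
next
  case (insert i S) then show ?case using psf_add[of r "f i" "\<lambda>x. \<Sum>i\<in>S. f i x"] by simp
qed

lemma psf_prod: "finite S \<Longrightarrow> (\<And>i. i \<in> S \<Longrightarrow> psf r (f i)) \<Longrightarrow> psf r (\<lambda>x. \<Prod>i\<in>S. f i x)"
proof (induction S rule: finite_induct)
  case empty then show ?case using psf_const[of r 1] by simp
next
  case (insert i S) then show ?case using psf_mult[of r "f i" "\<lambda>x. \<Prod>i\<in>S. f i x"] by simp
qed



lemma ev_pos_lt: "r > 0 \<Longrightarrow> eventually (\<lambda>x::real. 0 < x \<and> x < r) (at_right 0)"
  unfolding eventually_at_right_field by (intro exI[of _ r]) auto

lemma psf_val: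
  fixes f :: "real \<Rightarrow> 'a::{real_normed_field,banach}"
  assumes "psf r f" "r > 0"
  shows "(\<forall>x. \<bar>x\<bar> < r \<longrightarrow> f x = 0) \<or>
         (\<exists>p c C. 0 < c \<and> c \<le> C \<and> eventually (\<lambda>x. c * x^p \<le> norm (f x) \<and> norm (f x) \<le> C * x^p) (at_right 0))"
proof -
  obtain a where a: "\<And>x. \<bar>x\<bar> < r \<Longrightarrow> summable (\<lambda>m. norm (a m) * \<bar>x\<bar> ^ m) \<and>
       (\<lambda>m. a m * of_real x ^ m) sums f x" using assms(1) unfolding psf_def by blast
  show ?thesis
  proof (cases "\<forall>m. a m = 0")
    case True
    have "f x = 0" if "\<bar>x\<bar> < r" for x
      using a[OF that] True sums_unique[of "\<lambda>_. 0::'a"] by (simp add: sums_iff)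
    then show ?thesis by (intro disjI1) auto
  next
    case False
    define p where "p = (LEAST m. a m \<noteq> 0)"
    have ap: "a p \<noteq> 0" unfolding p_def using False LeastI_ex[of "\<lambda>m. a m \<noteq> 0"] by auto
    have alow: "a i = 0" if "i < p" for i using not_less_Least[of i "\<lambda>m. a m \<noteq> 0"] that unfolding p_def by auto
    define G where "G z = (\<Sum>k. a (k + p) * z ^ k)" for z :: 'a
    have sumt: "summable (\<lambda>k. a (k + p) * of_real t ^ k)" if t: "0 < t" "t < r" for t
    proof -
      have "summable (\<lambda>m. norm (a m) * \<bar>t\<bar> ^ m)" using a[of t] t by auto
      then have "summable (\<lambda>k. norm (a (k + p)) * \<bar>t\<bar> ^ (k + p))"
        by (rule summable_ignore_initial_segment)
      then have "summable (\<lambda>k. \<bar>t\<bar> ^ p * (norm (a (k + p)) * \<bar>t\<bar> ^ k))"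
        by (simp add: power_add mult_ac)
      then have "summable (\<lambda>k. norm (a (k + p)) * \<bar>t\<bar> ^ k)" using t by simp
      then have "summable (\<lambda>k. norm (a (k + p) * of_real t ^ k))"
        by (simp add: norm_mult norm_power)
      then show ?thesis by (rule summable_norm_cancel)
    qed
    have fx: "f x = of_real x ^ p * G (of_real x)" if x: "0 < x" "x < r" for x
    proof -
      have sx: "(\<lambda>m. a m * of_real x ^ m) sums f x" using a[of x] x by auto
      then have "f x = (\<Sum>n. a (n + p) * of_real x ^ (n + p)) + (\<Sum>i<p. a i * of_real x ^ i)"
        using suminf_split_initial_segment[of "\<lambda>m. a m * of_real x ^ m" p] by (simp add: sums_iff)
      also have "(\<Sum>i<p. a i * (of_real x::'a) ^ i) = 0" using alow by simp
      also have "(\<Sum>n. a (n + p) * (of_real x::'a) ^ (n + p)) = (\<Sum>n. of_real x ^ p * (a (n + p) * of_real x ^ n))"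
        by (simp add: power_add mult_ac)
      also have "\<dots> = of_real x ^ p * G (of_real x)"
        unfolding G_def by (rule suminf_mult[OF sumt[OF x]])
      finally show ?thesis by simp
    qed
    have "isCont G 0"
      unfolding G_def[abs_def]
      by (rule isCont_powser[of _ "of_real (r/2)"]) (use sumt[of "r/2"] assms(2) in auto)
    then have iG: "isCont (\<lambda>x::real. G (of_real x)) 0"
    proof -
      have "isCont (of_real :: real \<Rightarrow> 'a) 0" by (intro continuous_intros)
      from isCont_o2[OF this, of G] \<open>isCont G 0\<close> show ?thesis by simp
    qed
    have "((\<lambda>x::real. G (of_real x)) \<longlongrightarrow> G 0) (at_right 0)"
      using tendsto_mono[OF at_le[OF subset_UNIV] iG[unfolded isCont_def]] by simp
    moreover have G0: "G 0 = a p" unfolding G_def by simp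
    ultimately have lim: "((\<lambda>x::real. G (of_real x)) \<longlongrightarrow> a p) (at_right 0)" by simp
    have "eventually (\<lambda>x. dist (G (of_real x)) (a p) < norm (a p) / 2) (at_right 0)"
      using tendstoD[OF lim, of "norm (a p)/2"] ap by simp
    then have ev: "eventually (\<lambda>x. norm (a p) / 2 * x ^ p \<le> norm (f x) \<and> norm (f x) \<le> 3 * norm (a p) / 2 * x ^ p) (at_right 0)"
      using ev_pos_lt[OF assms(2)]
    proof eventually_elim
      case (elim x)
      then have h: "0 < x \<and> x < r \<and> dist (G (of_real x)) (a p) < norm (a p) / 2" by simp
      have nf: "norm (f x) = x ^ p * norm (G (of_real x))" using fx[of x] h by (simp add: norm_mult norm_power)
      have "norm (a p) - norm (G (of_real x)) \<le> dist (G (of_real x)) (a p)"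
        by (metis dist_norm norm_minus_commute norm_triangle_ineq2)
      moreover have "norm (G (of_real x)) - norm (a p) \<le> dist (G (of_real x)) (a p)"
        by (metis dist_norm norm_triangle_ineq2)
      ultimately have A: "norm (a p) / 2 \<le> norm (G (of_real x))" and B: "norm (G (of_real x)) \<le> 3 * norm (a p) / 2"
        using h by linarith+
      have xp: "0 \<le> x ^ p" using h by simp
      have l1: "norm (a p) / 2 * x ^ p \<le> norm (G (of_real x)) * x ^ p" by (rule mult_right_mono[OF A xp])
      have l2: "norm (G (of_real x)) * x ^ p \<le> 3 * norm (a p) / 2 * x ^ p" by (rule mult_right_mono[OF B xp])
      show ?case unfolding nf using l1 l2 by (simp add: mult.commute)
    qed
    show ?thesis
      apply (rule disjI2)
      apply (rule exI[of _ p], rule exI[of _ "norm (a p)/2"], rule exI[of _ "3 * norm (a p)/2"])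
      using ev ap by simp
  qed
qed



definition lps :: "real \<Rightarrow> (real \<Rightarrow> 'a::{real_normed_field,banach}) \<Rightarrow> bool" where
  "lps r f \<longleftrightarrow> (\<exists>N Q. psf r Q \<and> (\<forall>x. 0 < x \<and> x < r \<longrightarrow> f x = Q x / of_real x ^ N))"

lemma lpsE:
  assumes "lps r f"
  obtains N Q where "psf r Q" "\<And>x. 0 < x \<Longrightarrow> x < r \<Longrightarrow> f x = Q x / of_real x ^ N"
  using assms unfolding lps_def by auto

lemma lpsI: "psf r Q \<Longrightarrow> (\<And>x. 0 < x \<Longrightarrow> x < r \<Longrightarrow> f x = Q x / of_real x ^ N) \<Longrightarrow> lps r f"
  unfolding lps_def by (intro exI[of _ N] exI[of _ Q]) auto

lemma lps_psf: "psf r Q \<Longrightarrow> lps r Q"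
  by (rule lpsI[where N=0]) auto

lemma lps_const: "lps r (\<lambda>x. c)"
  by (rule lps_psf[OF psf_const])

lemma lps_mono: "lps r f \<Longrightarrow> 0 < r' \<Longrightarrow> r' \<le> r \<Longrightarrow> lps r' f"
  by (erule lpsE, rule lpsI, erule psf_mono) auto

lemma lps_cong: "lps r f \<Longrightarrow> (\<And>x. 0 < x \<Longrightarrow> x < r \<Longrightarrow> g x = f x) \<Longrightarrow> lps r g"
  by (erule lpsE, rule lpsI) auto

lemma lps_add:
  fixes f g :: "real \<Rightarrow> 'a::{real_normed_field,banach}"
  assumes "lps r f" "lps r g" shows "lps r (\<lambda>x. f x + g x)"
proof -
  obtain N1 Q1 where 1: "psf r Q1" "\<And>x. 0 < x \<Longrightarrow> x < r \<Longrightarrow> f x = Q1 x / of_real x ^ N1"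
    using assms(1) by (metis lpsE)
  obtain N2 Q2 where 2: "psf r Q2" "\<And>x. 0 < x \<Longrightarrow> x < r \<Longrightarrow> g x = Q2 x / of_real x ^ N2"
    using assms(2) by (metis lpsE)
  have p: "psf r (\<lambda>x. Q1 x * (1 * of_real x ^ N2) + Q2 x * (1 * of_real x ^ N1))"
    by (intro psf_add psf_mult 1 2 psf_monom)
  show ?thesis
  proof (rule lpsI[OF p, where N="N1+N2"])
    fix x :: real assume x: "0 < x" "x < r"
    then have "(of_real x :: 'a) \<noteq> 0" by simp
    then show "f x + g x = (Q1 x * (1 * of_real x ^ N2) + Q2 x * (1 * of_real x ^ N1)) / of_real x ^ (N1 + N2)"
      using 1(2)[OF x] 2(2)[OF x] by (simp add: field_simps power_add)
  qed
qed

lemma lps_mult: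
  fixes f g :: "real \<Rightarrow> 'a::{real_normed_field,banach}"
  assumes "lps r f" "lps r g" shows "lps r (\<lambda>x. f x * g x)"
proof -
  obtain N1 Q1 where 1: "psf r Q1" "\<And>x. 0 < x \<Longrightarrow> x < r \<Longrightarrow> f x = Q1 x / of_real x ^ N1"
    using assms(1) by (metis lpsE)
  obtain N2 Q2 where 2: "psf r Q2" "\<And>x. 0 < x \<Longrightarrow> x < r \<Longrightarrow> g x = Q2 x / of_real x ^ N2"
    using assms(2) by (metis lpsE)
  have p: "psf r (\<lambda>x. Q1 x * Q2 x)"
    by (intro psf_mult 1 2)
  show ?thesis
  proof (rule lpsI[OF p, where N="N1+N2"])
    fix x :: real assume x: "0 < x" "x < r"
    then have "(of_real x :: 'a) \<noteq> 0" by simp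
    then show "f x * g x = (Q1 x * Q2 x) / of_real x ^ (N1 + N2)"
      using 1(2)[OF x] 2(2)[OF x] by (simp add: field_simps power_add)
  qed
qed

lemma lps_sum: "finite S \<Longrightarrow> (\<And>i. i \<in> S \<Longrightarrow> lps r (f i)) \<Longrightarrow> lps r (\<lambda>x. \<Sum>i\<in>S. f i x)"
proof (induction S rule: finite_induct)
  case empty then show ?case using lps_const[of r 0] by simp
next
  case (insert i S) then show ?case using lps_add[of r "f i" "\<lambda>x. \<Sum>i\<in>S. f i x"] by simp
qed

lemma lps_prod: "finite S \<Longrightarrow> (\<And>i. i \<in> S \<Longrightarrow> lps r (f i)) \<Longrightarrow> lps r (\<lambda>x. \<Prod>i\<in>S. f i x)"
proof (induction S rule: finite_induct)
  case empty then show ?case using lps_const[of r 1] by simp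
next
  case (insert i S) then show ?case using lps_mult[of r "f i" "\<lambda>x. \<Prod>i\<in>S. f i x"] by simp
qed

lemma lps_diff:
  fixes f g :: "real \<Rightarrow> 'a::{real_normed_field,banach}"
  assumes "lps r f" "lps r g" shows "lps r (\<lambda>x. f x - g x)"
proof -
  have "lps r (\<lambda>x. f x + (-1) * g x)" by (intro lps_add lps_mult lps_const assms)
  then show ?thesis by simp
qed

lemma lps_ratio:
  fixes A B :: "real \<Rightarrow> 'a::{real_normed_field,banach}"
  assumes "lps r A" "lps r B" "r > 0" and Bnz: "\<And>x. 0 < x \<Longrightarrow> x < r \<Longrightarrow> B x \<noteq> 0"
  shows "(\<forall>x. 0 < x \<and> x < r \<longrightarrow> A x = 0) \<or>
    (\<exists>e d c C. 0 < c \<and> eventually (\<lambda>x. c * x^e / x^d \<le> norm (A x / B x) \<and> norm (A x / B x) \<le> C * x^e / x^d) (at_right 0))"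
proof -
  obtain a QA where A: "psf r QA" "\<And>x. 0 < x \<Longrightarrow> x < r \<Longrightarrow> A x = QA x / of_real x ^ a"
    using assms(1) by (metis lpsE)
  obtain b QB where B: "psf r QB" "\<And>x. 0 < x \<Longrightarrow> x < r \<Longrightarrow> B x = QB x / of_real x ^ b"
    using assms(2) by (metis lpsE)
  have "QB (r/2) \<noteq> 0" using Bnz[of "r/2"] B(2)[of "r/2"] assms(3) by auto
  then have "\<not> (\<forall>x. \<bar>x\<bar> < r \<longrightarrow> QB x = 0)" using assms(3) by (intro notI) (drule spec[of _ "r/2"], auto)
  then obtain q cB CB where qB: "0 < cB" "cB \<le> CB"
    "eventually (\<lambda>x. cB * x^q \<le> norm (QB x) \<and> norm (QB x) \<le> CB * x^q) (at_right 0)"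
    using psf_val[OF B(1) assms(3)] by auto
  show ?thesis
  proof (cases "\<forall>x. \<bar>x\<bar> < r \<longrightarrow> QA x = 0")
    case True
    then show ?thesis using A(2) by (intro disjI1) auto
  next
    case False
    then obtain p cA CA where qA: "0 < cA" "cA \<le> CA"
      "eventually (\<lambda>x. cA * x^p \<le> norm (QA x) \<and> norm (QA x) \<le> CA * x^p) (at_right 0)"
      using psf_val[OF A(1) assms(3)] by auto
    have ev: "eventually (\<lambda>x. cA / CB * x^(p+b) / x^(a+q) \<le> norm (A x / B x) \<and> norm (A x / B x) \<le> CA / cB * x^(p+b) / x^(a+q)) (at_right 0)"
      using qA(3) qB(3) ev_pos_lt[OF assms(3)]
    proof eventually_elim
      case (elim x)
      then have x: "0 < x" "x < r" by auto
      have nAB: "norm (A x / B x) = (norm (QA x) * x ^ b) / (norm (QB x) * x ^ a)"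
        using A(2)[OF x] B(2)[OF x] x by (simp add: norm_divide norm_power norm_mult mult.commute)
      have pos: "0 < cB * x ^ q" using x qB by simp
      have QBp: "0 < norm (QB x)" using elim pos by linarith
      have n1: "cA * x^p * x^b \<le> norm (QA x) * x^b" by (rule mult_right_mono) (use elim x in auto)
      have n2: "norm (QA x) * x^b \<le> CA * x^p * x^b" by (rule mult_right_mono) (use elim x in auto)
      have d1: "norm (QB x) * x^a \<le> CB * x^q * x^a" by (rule mult_right_mono) (use elim x in auto)
      have d2: "cB * x^q * x^a \<le> norm (QB x) * x^a" by (rule mult_right_mono) (use elim x in auto)
      have d0: "0 < norm (QB x) * x^a" using QBp x by simp
      have d0': "0 < cB * x^q * x^a" using pos x by simp
      have n0: "0 \<le> norm (QA x) * x^b" using x by simp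
      have n0': "0 \<le> CA * x^p * x^b" using n0 n2 by linarith
      have "cA / CB * x^(p+b) / x^(a+q) = (cA * x^p * x^b) / (CB * x^q * x^a)"
        by (simp add: power_add field_simps)
      also have "\<dots> \<le> (norm (QA x) * x ^ b) / (norm (QB x) * x ^ a)"
        by (rule frac_le[OF n0 n1 d0 d1])
      finally have l: "cA / CB * x^(p+b) / x^(a+q) \<le> norm (A x / B x)" unfolding nAB .
      have "(norm (QA x) * x ^ b) / (norm (QB x) * x ^ a) \<le> (CA * x^p * x^b) / (cB * x^q * x^a)"
        by (rule frac_le[OF n0' n2 d0' d2])
      also have "\<dots> = CA / cB * x^(p+b) / x^(a+q)"
        by (simp add: power_add field_simps)
      finally have u: "norm (A x / B x) \<le> CA / cB * x^(p+b) / x^(a+q)" unfolding nAB .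
      show ?case using l u by simp
    qed
    show ?thesis
      apply (rule disjI2)
      apply (rule exI[of _ "p+b"], rule exI[of _ "a+q"], rule exI[of _ "cA / CB"], rule exI[of _ "CA / cB"])
      using ev qA qB by simp
  qed
qed



lemma ev_small: "(0::real) < K \<Longrightarrow> eventually (\<lambda>x::real. x < K) (at_right 0)"
  unfolding eventually_at_right_field by (intro exI[of _ K]) auto

lemma ev_Cx: "eventually (\<lambda>x::real. \<bar>C\<bar> * x < 1) (at_right 0)"
proof -
  have "((\<lambda>x::real. \<bar>C\<bar> * x) \<longlongrightarrow> \<bar>C\<bar> * 0) (at_right 0)"
    by (intro tendsto_intros)
  from order_tendstoD(2)[OF this[simplified], of 1] show ?thesis by simp
qed

lemma lps_ratio_bound:
  fixes A B :: "real \<Rightarrow> 'a::{real_normed_field,banach}"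
  assumes "lps r A" "lps r B" "r > 0" and Bnz: "\<And>x. 0 < x \<Longrightarrow> x < r \<Longrightarrow> B x \<noteq> 0"
  shows "\<exists>D. eventually (\<lambda>x. norm (A x / B x) \<le> 1 / x ^ D) (at_right 0)"
proof -
  from lps_ratio[OF assms] show ?thesis
  proof
    assume h: "\<forall>x. 0 < x \<and> x < r \<longrightarrow> A x = 0"
    have "eventually (\<lambda>x. norm (A x / B x) \<le> 1 / x ^ 0) (at_right 0)"
      using ev_pos_lt[OF assms(3)] by eventually_elim (use h in auto)
    then show ?thesis by (rule exI)
  next
    assume "\<exists>e d c C. 0 < c \<and> eventually (\<lambda>x. c * x^e / x^d \<le> norm (A x / B x) \<and> norm (A x / B x) \<le> C * x^e / x^d) (at_right 0)"
    then obtain e d c C where ev: "eventually (\<lambda>x. c * x^e / x^d \<le> norm (A x / B x) \<and> norm (A x / B x) \<le> C * x^e / x^d) (at_right 0)"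
      by auto
    have "eventually (\<lambda>x. norm (A x / B x) \<le> 1 / x ^ Suc d) (at_right 0)"
      using ev ev_pos_lt[OF zero_less_one] ev_Cx[of C]
    proof eventually_elim
      case (elim x)
      then have x: "0 < x" "x < 1" by auto
      have xe: "x ^ e \<le> 1" using x by (simp add: power_le_one)
      have "C * x ^ e \<le> \<bar>C\<bar>"
        using xe x by (metis abs_ge_self abs_mult abs_of_nonneg dual_order.trans mult_left_le zero_le_power abs_ge_zero less_imp_le)
      then have "C * x^e / x^d \<le> \<bar>C\<bar> / x^d" using x by (simp add: divide_right_mono)
      also have "\<dots> \<le> 1 / x ^ Suc d"
        using x elim by (simp add: field_simps)
      finally show ?case using elim by linarith
    qed
    then show ?thesis by (rule exI)
  qed
qed

lemma lps_ratio_rate: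
  fixes A B :: "real \<Rightarrow> 'a::{real_normed_field,banach}"
  assumes "lps r A" "lps r B" "r > 0" and Bnz: "\<And>x. 0 < x \<Longrightarrow> x < r \<Longrightarrow> B x \<noteq> 0"
    and lim: "((\<lambda>x. A x / B x) \<longlongrightarrow> L) (at_right 0)"
  shows "\<exists>C. eventually (\<lambda>x. norm (A x / B x - L) \<le> C * x) (at_right 0)"
proof -
  have A': "lps r (\<lambda>x. A x - L * B x)" by (intro lps_diff lps_mult lps_const assms)
  have eq: "(A x - L * B x) / B x = A x / B x - L" if "0 < x" "x < r" for x
    using Bnz[OF that] by (simp add: field_simps)
  have lim0: "((\<lambda>x. norm (A x / B x - L)) \<longlongrightarrow> 0) (at_right 0)"
    using tendsto_norm_zero[OF LIM_zero[OF lim]] .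
  from lps_ratio[OF A' assms(2,3) Bnz] show ?thesis
  proof
    assume h: "\<forall>x. 0 < x \<and> x < r \<longrightarrow> A x - L * B x = 0"
    have "eventually (\<lambda>x. norm (A x / B x - L) \<le> 0 * x) (at_right 0)"
      using ev_pos_lt[OF assms(3)] by eventually_elim (use h eq in force)
    then show ?thesis by (rule exI)
  next
    assume "\<exists>e d c C. 0 < c \<and> eventually (\<lambda>x. c * x^e / x^d \<le> norm ((A x - L * B x) / B x) \<and> norm ((A x - L * B x) / B x) \<le> C * x^e / x^d) (at_right 0)"
    then obtain e d c C where c: "0 < c" and ev0: "eventually (\<lambda>x. c * x^e / x^d \<le> norm ((A x - L * B x) / B x) \<and> norm ((A x - L * B x) / B x) \<le> C * x^e / x^d) (at_right 0)"
      by auto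
    have ev: "eventually (\<lambda>x. c * x^e / x^d \<le> norm (A x / B x - L) \<and> norm (A x / B x - L) \<le> C * x^e / x^d) (at_right 0)"
      using ev0 ev_pos_lt[OF assms(3)] by eventually_elim (use eq in auto)
    show ?thesis
    proof (cases "e \<le> d")
      case True
      have "eventually (\<lambda>x. False) (at_right (0::real))"
        using ev ev_pos_lt[OF zero_less_one] order_tendstoD(2)[OF lim0 c]
      proof eventually_elim
        case (elim x)
        then have x: "0 < x" "x < 1" by auto
        have "x ^ d \<le> x ^ e" using x True by (simp add: power_decreasing)
        then have "1 \<le> x^e / x^d" using x by simp
        then have "c * 1 \<le> c * (x^e / x^d)" using c by (intro mult_left_mono) auto
        then have "c \<le> c * x^e / x^d" by simp
        then show ?case using elim by linarith
      qed
      then show ?thesis by simp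
    next
      case False
      have "eventually (\<lambda>x. norm (A x / B x - L) \<le> \<bar>C\<bar> * x) (at_right 0)"
        using ev ev_pos_lt[OF zero_less_one]
      proof eventually_elim
        case (elim x)
        then have x: "0 < x" "x < 1" by auto
        have "x^e / x^d = x ^ (e - d)" using x False by (simp add: power_diff)
        also have "\<dots> \<le> x ^ 1" using x False by (intro power_decreasing) auto
        finally have "x^e / x^d \<le> x" by simp
        moreover have "0 \<le> x^e / x^d" using x by simp
        ultimately have "C * (x^e / x^d) \<le> \<bar>C\<bar> * x"
          by (metis abs_ge_self abs_ge_zero mult_mono order_trans)
        then show ?case using elim by simp
      qed
      then show ?thesis by (rule exI)
    qed
  qed
qed



lemma inv_props:
  fixes A :: "'a::field^'n::finite^'n"
  assumes "invertible A"
  shows "A ** matrix_inv A = mat 1" "matrix_inv A ** A = mat 1"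
proof -
  obtain A' where "A ** A' = mat 1 \<and> A' ** A = mat 1" using assms unfolding invertible_def by auto
  then have "A ** matrix_inv A = mat 1 \<and> matrix_inv A ** A = mat 1"
    unfolding matrix_inv_def by (rule someI)
  then show "A ** matrix_inv A = mat 1" "matrix_inv A ** A = mat 1" by auto
qed

lemma inv_unique:
  fixes A X :: "'a::field^'n::finite^'n"
  assumes "invertible A" "A ** X = mat 1"
  shows "matrix_inv A = X"
proof -
  have "matrix_inv A = matrix_inv A ** (A ** X)" using assms(2) by (simp add: matrix_mul_rid)
  also have "\<dots> = (matrix_inv A ** A) ** X" by (simp add: matrix_mul_assoc)
  also have "\<dots> = X" using inv_props[OF assms(1)] by (simp add: matrix_mul_lid)
  finally show ?thesis .
qed

lemma inv_mult:
  fixes A B :: "'a::field^'n::finite^'n"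
  assumes "invertible A" "invertible B"
  shows "invertible (A ** B)" "matrix_inv (A ** B) = matrix_inv B ** matrix_inv A"
proof -
  have 1: "(A ** B) ** (matrix_inv B ** matrix_inv A) = mat 1"
    by (metis inv_props(1) assms matrix_mul_assoc matrix_mul_rid)
  have 2: "(matrix_inv B ** matrix_inv A) ** (A ** B) = mat 1"
    by (metis inv_props(2) assms matrix_mul_assoc matrix_mul_rid)
  show inv: "invertible (A ** B)" unfolding invertible_def using 1 2 by auto
  show "matrix_inv (A ** B) = matrix_inv B ** matrix_inv A" by (rule inv_unique[OF inv 1])
qed

lemma mult_axis: "((M::'a::comm_ring_1^'n::finite^'m) *v axis k 1) $ i = M $ i $ k"
  by (simp add: matrix_vector_mult_def axis_def if_distrib cong: if_cong)

lemma axis_nth': "axis k x $ a = (if a = k then x else 0)"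
  unfolding axis_def by simp

lemma inv_entry:
  fixes A :: "'a::field^'n::finite^'n"
  assumes "invertible A"
  shows "matrix_inv A $ i $ k = det (\<chi> a b. if b = i then (if a = k then 1 else 0) else A$a$b) / det A"
proof -
  have d: "det A \<noteq> 0" using assms invertible_det_nz by blast
  define x where "x = matrix_inv A *v axis k 1"
  have "A *v x = axis k 1"
    unfolding x_def matrix_vector_mul_assoc inv_props(1)[OF assms] by simp
  then have "x = (\<chi> k'. det (\<chi> i j. if j = k' then (axis k 1 :: 'a^'n)$i else A$i$j) / det A)"
    using cramer[OF d] by blast
  then have "x $ i = det (\<chi> a b. if b = i then (axis k 1 :: 'a^'n)$a else A$a$b) / det A" by simp
  also have "(\<chi> a b. if b = i then (axis k 1 :: 'a^'n)$a else A$a$b) = (\<chi> a b. if b = i then (if a = k then 1 else 0) else A$a$b)"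
    by (simp only: axis_nth')
  finally have "x $ i = det (\<chi> a b. if b = i then (if a = k then 1 else 0) else A$a$b) / det A" .
  moreover have "x $ i = matrix_inv A $ i $ k" unfolding x_def by (rule mult_axis)
  ultimately show ?thesis by (simp add: axis_def)
qed

definition ctr :: "'a::field^'n::finite^'n \<Rightarrow> ('n \<Rightarrow> 'n \<Rightarrow> 'n \<Rightarrow> 'a) \<Rightarrow> 'n \<Rightarrow> 'n \<Rightarrow> 'n \<Rightarrow> 'a" where
  "ctr U c i' j' k' = (\<Sum>i\<in>UNIV. \<Sum>j\<in>UNIV. \<Sum>k\<in>UNIV. U $ i $ i' * U $ j $ j' * matrix_inv U $ k' $ k * c i j k)"

lemma contracts_trans: "contracts U c c' \<longleftrightarrow> (\<forall>i' j' k'. ((\<lambda>\<epsilon>. ctr (U \<epsilon>) c i' j' k') \<longlongrightarrow> c' i' j' k') (at_right 0))"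
  unfolding contracts_def ctr_def ..

lemma trans_diff: "ctr U c i' j' k' - ctr U d i' j' k' = ctr U (\<lambda>i j k. c i j k - d i j k) i' j' k'"
  unfolding ctr_def by (simp add: sum_subtractf[symmetric] algebra_simps)

lemma mv3: "(\<Sum>a\<in>A. \<Sum>i\<in>I. \<Sum>j\<in>J. \<Sum>k\<in>K. F a i j k) = (\<Sum>i\<in>I. \<Sum>j\<in>J. \<Sum>k\<in>K. \<Sum>a\<in>A. F a i j k)"
proof -
  have "(\<Sum>a\<in>A. \<Sum>i\<in>I. \<Sum>j\<in>J. \<Sum>k\<in>K. F a i j k) = (\<Sum>i\<in>I. \<Sum>a\<in>A. \<Sum>j\<in>J. \<Sum>k\<in>K. F a i j k)"
    by (rule sum.swap)
  also have "\<dots> = (\<Sum>i\<in>I. \<Sum>j\<in>J. \<Sum>a\<in>A. \<Sum>k\<in>K. F a i j k)"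
    by (rule sum.cong[OF refl], rule sum.swap)
  also have "\<dots> = (\<Sum>i\<in>I. \<Sum>j\<in>J. \<Sum>k\<in>K. \<Sum>a\<in>A. F a i j k)"
    by (rule sum.cong[OF refl], rule sum.cong[OF refl], rule sum.swap)
  finally show ?thesis .
qed

lemma swap6: "(\<Sum>a\<in>A. \<Sum>b\<in>B. \<Sum>d\<in>D. \<Sum>i\<in>I. \<Sum>j\<in>J. \<Sum>k\<in>K. F a b d i j k) =
   (\<Sum>i\<in>I. \<Sum>j\<in>J. \<Sum>k\<in>K. \<Sum>a\<in>A. \<Sum>b\<in>B. \<Sum>d\<in>D. F a b d i j k)"
proof -
  have "(\<Sum>a\<in>A. \<Sum>b\<in>B. \<Sum>d\<in>D. \<Sum>i\<in>I. \<Sum>j\<in>J. \<Sum>k\<in>K. F a b d i j k) =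
        (\<Sum>a\<in>A. \<Sum>b\<in>B. \<Sum>i\<in>I. \<Sum>j\<in>J. \<Sum>k\<in>K. \<Sum>d\<in>D. F a b d i j k)"
    by (rule sum.cong[OF refl], rule sum.cong[OF refl], rule mv3)
  also have "\<dots> = (\<Sum>a\<in>A. \<Sum>i\<in>I. \<Sum>j\<in>J. \<Sum>k\<in>K. \<Sum>b\<in>B. \<Sum>d\<in>D. F a b d i j k)"
    by (rule sum.cong[OF refl], rule mv3)
  also have "\<dots> = (\<Sum>i\<in>I. \<Sum>j\<in>J. \<Sum>k\<in>K. \<Sum>a\<in>A. \<Sum>b\<in>B. \<Sum>d\<in>D. F a b d i j k)"
    by (rule mv3)
  finally show ?thesis .
qed

lemma trans_comp:
  fixes A B :: "'a::field^'n::finite^'n"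
  assumes "invertible A" "invertible B"
  shows "ctr (A ** B) c i' j' k' = ctr B (ctr A c) i' j' k'"
proof -
  let ?Ai = "matrix_inv A" and ?Bi = "matrix_inv B"
  have "ctr (A ** B) c i' j' k' = (\<Sum>i\<in>UNIV. \<Sum>j\<in>UNIV. \<Sum>k\<in>UNIV.
     (\<Sum>a\<in>UNIV. A$i$a * B$a$i') * (\<Sum>b\<in>UNIV. A$j$b * B$b$j') * (\<Sum>d\<in>UNIV. ?Bi$k'$d * ?Ai$d$k) * c i j k)"
    unfolding ctr_def inv_mult(2)[OF assms] by (simp add: matrix_matrix_mult_def)
  also have "\<dots> = (\<Sum>i\<in>UNIV. \<Sum>j\<in>UNIV. \<Sum>k\<in>UNIV. \<Sum>b\<in>UNIV. \<Sum>a\<in>UNIV. \<Sum>d\<in>UNIV.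
     B$a$i' * B$b$j' * ?Bi$k'$d * (A$i$a * A$j$b * ?Ai$d$k * c i j k))"
    by (simp add: sum_distrib_left sum_distrib_right mult_ac)
  also have "\<dots> = (\<Sum>i\<in>UNIV. \<Sum>j\<in>UNIV. \<Sum>k\<in>UNIV. \<Sum>a\<in>UNIV. \<Sum>b\<in>UNIV. \<Sum>d\<in>UNIV.
     B$a$i' * B$b$j' * ?Bi$k'$d * (A$i$a * A$j$b * ?Ai$d$k * c i j k))"
    by (rule sum.cong[OF refl], rule sum.cong[OF refl], rule sum.cong[OF refl], rule sum.swap)
  also have "\<dots> = (\<Sum>a\<in>UNIV. \<Sum>b\<in>UNIV. \<Sum>d\<in>UNIV. \<Sum>i\<in>UNIV. \<Sum>j\<in>UNIV. \<Sum>k\<in>UNIV.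
     B$a$i' * B$b$j' * ?Bi$k'$d * (A$i$a * A$j$b * ?Ai$d$k * c i j k))"
    by (rule swap6[symmetric])
  also have "\<dots> = ctr B (ctr A c) i' j' k'"
    unfolding ctr_def by (simp add: sum_distrib_left)
  finally show ?thesis .
qed



lemma det_lps:
  fixes M :: "real \<Rightarrow> 'a::{real_normed_field,banach}^'n::finite^'n"
  assumes "\<And>a b. lps r (\<lambda>x. M x $ a $ b)"
  shows "lps r (\<lambda>x. det (M x))"
proof -
  have "lps r (\<lambda>x. \<Sum>p\<in>{p. p permutes (UNIV::'n set)}. of_int (sign p) * (\<Prod>i\<in>UNIV. M x $ i $ p i))"
  proof (rule lps_sum)
    fix p :: "'n \<Rightarrow> 'n"
    have "lps r (\<lambda>x. \<Prod>i\<in>UNIV. M x $ i $ p i)"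
      by (rule lps_prod) (auto intro: assms)
    then show "lps r (\<lambda>x. of_int (sign p) * (\<Prod>i\<in>UNIV. M x $ i $ p i))"
      by (intro lps_mult lps_const)
  qed (simp add: finite_permutations)
  then show ?thesis unfolding det_def .
qed

lemma laurent_lps:
  fixes U :: "real \<Rightarrow> 'a::{real_normed_field,banach}^'n::finite^'n"
  assumes "laurent_entries U"
  shows "\<exists>r>0. \<forall>i j. lps r (\<lambda>x. U x $ i $ j)"
proof -
  obtain \<delta> where d: "\<delta> > 0" and H: "\<forall>i j. \<exists>(N::nat) (a::nat \<Rightarrow> 'a). \<forall>\<epsilon>\<in>{0<..<\<delta>}.
        summable (\<lambda>m. a m * of_real \<epsilon> ^ m) \<and>
        U \<epsilon> $ i $ j = (\<Sum>m. a m * of_real \<epsilon> ^ m) / of_real \<epsilon> ^ N"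
    using assms unfolding laurent_entries_def by auto
  have "lps \<delta> (\<lambda>x. U x $ i $ j)" for i j
  proof -
    obtain N a where Na: "\<forall>\<epsilon>\<in>{0<..<\<delta>}. summable (\<lambda>m. a m * of_real \<epsilon> ^ m) \<and>
        U \<epsilon> $ i $ j = (\<Sum>m. a m * of_real \<epsilon> ^ m) / of_real \<epsilon> ^ N"
      using H by metis
    have "psf \<delta> (\<lambda>x. \<Sum>m. a m * of_real x ^ m)"
      unfolding psf_def
    proof (intro exI[of _ a] allI impI conjI)
      fix x :: real assume x: "\<bar>x\<bar> < \<delta>"
      define t where "t = (\<bar>x\<bar> + \<delta>) / 2"
      have t: "t \<in> {0<..<\<delta>}" "\<bar>x\<bar> < t" using x d unfolding t_def by auto
      have "summable (\<lambda>m. a m * of_real t ^ m)" using Na t(1) by auto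
      then have "summable (\<lambda>m. norm (a m * (of_real x :: 'a) ^ m))"
        by (rule powser_insidea) (use t in auto)
      then show "summable (\<lambda>m. norm (a m) * \<bar>x\<bar> ^ m)" by (simp add: norm_mult norm_power)
      from \<open>summable (\<lambda>m. norm (a m * (of_real x :: 'a) ^ m))\<close>
      show "(\<lambda>m. a m * of_real x ^ m) sums (\<Sum>m. a m * of_real x ^ m)"
        by (intro summable_sums) (rule summable_norm_cancel)
    qed
    then show ?thesis by (rule lpsI[where N=N]) (use Na in auto)
  qed
  then show ?thesis using d by auto
qed

lemma pow_mono_inv: "0 < (x::real) \<Longrightarrow> x \<le> 1 \<Longrightarrow> D \<le> S \<Longrightarrow> 1 / x ^ D \<le> 1 / x ^ S"
  by (intro divide_left_mono power_decreasing) auto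

definition invnum :: "'a::field^'n::finite^'n \<Rightarrow> 'n \<Rightarrow> 'n \<Rightarrow> 'a" where
  "invnum A i k = det (\<chi> a b. if b = i then (if a = k then 1 else 0) else A$a$b)"

lemma invnum_lps:
  fixes U :: "real \<Rightarrow> 'a::{real_normed_field,banach}^'n::finite^'n"
  assumes "\<And>i j. lps r (\<lambda>x. U x $ i $ j)"
  shows "lps r (\<lambda>x. invnum (U x) i k)"
  unfolding invnum_def
proof (rule det_lps)
  fix a b
  show "lps r (\<lambda>x. (\<chi> a b. if b = i then (if a = k then 1 else 0) else U x$a$b) $ a $ b)"
    by (cases "b = i") (simp_all add: lps_const assms)
qed

lemma path_setup:
  fixes U :: "real \<Rightarrow> 'a::{real_normed_field,banach}^'n::finite^'n"
  assumes inv: "\<forall>\<epsilon>\<in>{0<..1}. invertible (U \<epsilon>)" and le: "laurent_entries U"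
  shows "\<exists>r>0. r \<le> 1 \<and> (\<forall>i j. lps r (\<lambda>x. U x $ i $ j)) \<and> lps r (\<lambda>x. det (U x)) \<and>
     (\<forall>i k. lps r (\<lambda>x. invnum (U x) i k)) \<and> (\<forall>x. 0 < x \<and> x < r \<longrightarrow> det (U x) \<noteq> 0) \<and>
     (\<forall>x i k. 0 < x \<and> x < r \<longrightarrow> matrix_inv (U x) $ i $ k = invnum (U x) i k / det (U x))"
proof -
  obtain r0 where r0: "r0 > 0" "\<forall>i j. lps r0 (\<lambda>x. U x $ i $ j)" using laurent_lps[OF le] by auto
  define r where "r = min r0 1"
  have r: "r > 0" "r \<le> 1" "r \<le> r0" using r0 unfolding r_def by auto
  have e: "\<And>i j. lps r (\<lambda>x. U x $ i $ j)" using lps_mono[OF r0(2)[rule_format] r(1) r(3)] .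
  have iv: "invertible (U x)" if "0 < x" "x < r" for x using inv that r by auto
  have dz: "det (U x) \<noteq> 0" if "0 < x" "x < r" for x using iv[OF that] invertible_det_nz by auto
  show ?thesis
    using r e det_lps[OF e] invnum_lps[OF e] dz inv_entry[OF iv]
    unfolding invnum_def by (intro exI[of _ r]) auto
qed



lemma path_bounds:
  fixes U :: "real \<Rightarrow> 'a::{real_normed_field,banach}^'n::finite^'n"
  assumes inv: "\<forall>\<epsilon>\<in>{0<..1}. invertible (U \<epsilon>)" and le: "laurent_entries U"
  shows "\<exists>S. eventually (\<lambda>x. \<forall>i j. norm (U x $ i $ j) \<le> 1 / x ^ S \<and> norm (matrix_inv (U x) $ i $ j) \<le> 1 / x ^ S) (at_right 0)"
proof -
  obtain r where R: "r > 0" "r \<le> 1" and E: "\<forall>i j. lps r (\<lambda>x. U x $ i $ j)" and Dl: "lps r (\<lambda>x. det (U x))"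
    and IN: "\<forall>i k. lps r (\<lambda>x. invnum (U x) i k)" and DZ: "\<forall>x. 0 < x \<and> x < r \<longrightarrow> det (U x) \<noteq> 0"
    and IE: "\<forall>x i k. 0 < x \<and> x < r \<longrightarrow> matrix_inv (U x) $ i $ k = invnum (U x) i k / det (U x)"
    using path_setup[OF inv le] by auto
  have one: "\<forall>p::'n\<times>'n. \<exists>D. eventually (\<lambda>x. norm (U x $ fst p $ snd p) \<le> 1 / x ^ D \<and> norm (matrix_inv (U x) $ fst p $ snd p) \<le> 1 / x ^ D) (at_right 0)"
  proof
    fix p :: "'n \<times> 'n"
    obtain i j where p: "p = (i, j)" by (cases p)
    obtain D1 where D1: "eventually (\<lambda>x. norm (U x $ i $ j / 1) \<le> 1 / x ^ D1) (at_right 0)"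
      using lps_ratio_bound[OF E[rule_format, of i j] lps_const[of r 1] R(1)] by auto
    obtain D2 where D2: "eventually (\<lambda>x. norm (invnum (U x) i j / det (U x)) \<le> 1 / x ^ D2) (at_right 0)"
      using lps_ratio_bound[OF IN[rule_format, of i j] Dl R(1)] DZ by auto
    have "eventually (\<lambda>x. norm (U x $ i $ j) \<le> 1 / x ^ (D1 + D2) \<and> norm (matrix_inv (U x) $ i $ j) \<le> 1 / x ^ (D1 + D2)) (at_right 0)"
      using D1 D2 ev_pos_lt[OF R(1)]
    proof eventually_elim
      case (elim x)
      then have x: "0 < x" "x \<le> 1" using R by auto
      have a: "1 / x ^ D1 \<le> 1 / x ^ (D1 + D2)" by (rule pow_mono_inv[OF x]) simp
      have b: "1 / x ^ D2 \<le> 1 / x ^ (D1 + D2)" by (rule pow_mono_inv[OF x]) simp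
      show ?case using elim a b IE by auto
    qed
    then show "\<exists>D. eventually (\<lambda>x. norm (U x $ fst p $ snd p) \<le> 1 / x ^ D \<and> norm (matrix_inv (U x) $ fst p $ snd p) \<le> 1 / x ^ D) (at_right 0)"
      unfolding p by auto
  qed
  obtain Df where Df: "\<forall>p::'n\<times>'n. eventually (\<lambda>x. norm (U x $ fst p $ snd p) \<le> 1 / x ^ Df p \<and> norm (matrix_inv (U x) $ fst p $ snd p) \<le> 1 / x ^ Df p) (at_right 0)"
    using choice[OF one] by auto
  define S where "S = (\<Sum>p\<in>UNIV. Df p)"
  have DS: "Df p \<le> S" for p unfolding S_def by (rule member_le_sum) auto
  have "eventually (\<lambda>x. \<forall>p::'n\<times>'n. norm (U x $ fst p $ snd p) \<le> 1 / x ^ S \<and> norm (matrix_inv (U x) $ fst p $ snd p) \<le> 1 / x ^ S) (at_right 0)"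
  proof (rule eventually_all_finite)
    fix p :: "'n\<times>'n"
    show "eventually (\<lambda>x. norm (U x $ fst p $ snd p) \<le> 1 / x ^ S \<and> norm (matrix_inv (U x) $ fst p $ snd p) \<le> 1 / x ^ S) (at_right 0)"
      using Df[rule_format, of p] ev_pos_lt[OF zero_less_one]
    proof eventually_elim
      case (elim x)
      then have x: "0 < x" "x \<le> 1" by auto
      have "1 / x ^ Df p \<le> 1 / x ^ S" by (rule pow_mono_inv[OF x DS])
      then show ?case using elim by auto
    qed
  qed
  then have "eventually (\<lambda>x. \<forall>i j. norm (U x $ i $ j) \<le> 1 / x ^ S \<and> norm (matrix_inv (U x) $ i $ j) \<le> 1 / x ^ S) (at_right 0)"
    by eventually_elim (metis fst_conv snd_conv)
  then show ?thesis by (rule exI)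
qed

lemma path_rate:
  fixes U :: "real \<Rightarrow> 'a::{real_normed_field,banach}^'n::finite^'n"
  assumes inv: "\<forall>\<epsilon>\<in>{0<..1}. invertible (U \<epsilon>)" and le: "laurent_entries U"
    and lim: "((\<lambda>x. ctr (U x) g i' j' k') \<longlongrightarrow> L) (at_right 0)"
  shows "\<exists>C. eventually (\<lambda>x. norm (ctr (U x) g i' j' k' - L) \<le> C * x) (at_right 0)"
proof -
  obtain r where R: "r > 0" "r \<le> 1" and E: "\<forall>i j. lps r (\<lambda>x. U x $ i $ j)" and Dl: "lps r (\<lambda>x. det (U x))"
    and IN: "\<forall>i k. lps r (\<lambda>x. invnum (U x) i k)" and DZ: "\<forall>x. 0 < x \<and> x < r \<longrightarrow> det (U x) \<noteq> 0"
    and IE: "\<forall>x i k. 0 < x \<and> x < r \<longrightarrow> matrix_inv (U x) $ i $ k = invnum (U x) i k / det (U x)"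
    using path_setup[OF inv le] by auto
  define Num where "Num x = (\<Sum>i\<in>UNIV. \<Sum>j\<in>UNIV. \<Sum>k\<in>UNIV. U x $ i $ i' * U x $ j $ j' * invnum (U x) k' k * g i j k)" for x
  have NL: "lps r Num"
    unfolding Num_def
    by (intro lps_sum lps_mult lps_const E[rule_format] IN[rule_format]) simp_all
  have eq: "ctr (U x) g i' j' k' = Num x / det (U x)" if "0 < x" "x < r" for x
    unfolding ctr_def Num_def using IE that by (simp add: sum_divide_distrib)
  have ev: "eventually (\<lambda>x. ctr (U x) g i' j' k' = Num x / det (U x)) (at_right 0)"
    using ev_pos_lt[OF R(1)] by eventually_elim (use eq in auto)
  have "((\<lambda>x. Num x / det (U x)) \<longlongrightarrow> L) (at_right 0)"
    using tendsto_cong[OF ev] lim by simp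
  then obtain C where C: "eventually (\<lambda>x. norm (Num x / det (U x) - L) \<le> C * x) (at_right 0)"
    using lps_ratio_rate[OF NL Dl R(1)] DZ by auto
  have "eventually (\<lambda>x. norm (ctr (U x) g i' j' k' - L) \<le> C * x) (at_right 0)"
    using C ev by eventually_elim simp
  then show ?thesis by (rule exI)
qed



lemma main_generic:
  fixes Uh Ut :: "real \<Rightarrow> 'a::{real_normed_field,banach}^'n::finite^'n"
  assumes ih: "\<forall>\<epsilon>\<in>{0<..1}. invertible (Uh \<epsilon>)" and it: "\<forall>\<epsilon>\<in>{0<..1}. invertible (Ut \<epsilon>)"
    and lh: "laurent_entries Uh" and lt: "laurent_entries Ut"
    and ch: "contracts Uh g gh" and ct: "contracts Ut gh gt"
  shows "\<exists>\<nu>::nat. \<nu> > 0 \<and> contracts (\<lambda>\<epsilon>. Uh (\<epsilon> ^ \<nu>) ** Ut \<epsilon>) g gt"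
proof -
  obtain S where S: "eventually (\<lambda>x. \<forall>i j. norm (Ut x $ i $ j) \<le> 1 / x ^ S \<and> norm (matrix_inv (Ut x) $ i $ j) \<le> 1 / x ^ S) (at_right 0)"
    using path_bounds[OF it lt] by auto
  define \<nu> where "\<nu> = 3 * S + 1"
  have rate: "\<exists>C. eventually (\<lambda>x. norm (ctr (Uh x) g i j k - gh i j k) \<le> C * x) (at_right 0)" for i j k
    using path_rate[OF ih lh] ch[unfolded contracts_trans] by auto
  have "contracts (\<lambda>\<epsilon>. Uh (\<epsilon> ^ \<nu>) ** Ut \<epsilon>) g gt"
    unfolding contracts_trans
  proof (intro allI)
    fix i' j' k'
    define D where "D \<epsilon> i j k = ctr (Uh (\<epsilon> ^ \<nu>)) g i j k - gh i j k" for \<epsilon> i j k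
    have eq: "eventually (\<lambda>\<epsilon>. ctr (Ut \<epsilon>) gh i' j' k' + ctr (Ut \<epsilon>) (D \<epsilon>) i' j' k' =
        ctr (Uh (\<epsilon> ^ \<nu>) ** Ut \<epsilon>) g i' j' k') (at_right 0)"
      using ev_pos_lt[OF zero_less_one]
    proof eventually_elim
      case (elim \<epsilon>)
      have "0 < \<epsilon> ^ \<nu>" "\<epsilon> ^ \<nu> \<le> 1" using elim by (auto intro: power_le_one)
      then have i1: "invertible (Uh (\<epsilon> ^ \<nu>))" using ih by auto
      have i2: "invertible (Ut \<epsilon>)" using it elim by auto
      have "ctr (Uh (\<epsilon> ^ \<nu>) ** Ut \<epsilon>) g i' j' k' = ctr (Ut \<epsilon>) (ctr (Uh (\<epsilon> ^ \<nu>)) g) i' j' k'"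
        by (rule trans_comp[OF i1 i2])
      also have "\<dots> = ctr (Ut \<epsilon>) gh i' j' k' + (ctr (Ut \<epsilon>) (ctr (Uh (\<epsilon> ^ \<nu>)) g) i' j' k' - ctr (Ut \<epsilon>) gh i' j' k')"
        by simp
      also have "ctr (Ut \<epsilon>) (ctr (Uh (\<epsilon> ^ \<nu>)) g) i' j' k' - ctr (Ut \<epsilon>) gh i' j' k' = ctr (Ut \<epsilon>) (D \<epsilon>) i' j' k'"
        unfolding trans_diff D_def[abs_def] ..
      finally show ?case by simp
    qed
    have l1: "((\<lambda>\<epsilon>. ctr (Ut \<epsilon>) gh i' j' k') \<longlongrightarrow> gt i' j' k') (at_right 0)"
      using ct unfolding contracts_trans by auto
    have l2: "((\<lambda>\<epsilon>. ctr (Ut \<epsilon>) (D \<epsilon>) i' j' k') \<longlongrightarrow> 0) (at_right 0)"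
      unfolding ctr_def
    proof (intro tendsto_null_sum)
      fix i j k
      obtain C where C: "eventually (\<lambda>x. norm (ctr (Uh x) g i j k - gh i j k) \<le> C * x) (at_right 0)"
        using rate[of i j k] by auto
      then obtain b where b: "b > 0" "\<And>y. 0 < y \<Longrightarrow> y < b \<Longrightarrow> norm (ctr (Uh y) g i j k - gh i j k) \<le> C * y"
        unfolding eventually_at_right_field by auto
      have "eventually (\<lambda>\<epsilon>. norm (Ut \<epsilon> $ i $ i' * Ut \<epsilon> $ j $ j' * matrix_inv (Ut \<epsilon>) $ k' $ k * D \<epsilon> i j k) \<le> \<bar>C\<bar> * \<epsilon>) (at_right 0)"
        using S ev_pos_lt[OF zero_less_one] ev_small[OF b(1)]
      proof eventually_elim
        case (elim \<epsilon>)
        then have e: "0 < \<epsilon>" "\<epsilon> < 1" "\<epsilon> < b" by auto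
        have en: "\<epsilon> ^ \<nu> \<le> \<epsilon>" using power_decreasing[of 1 \<nu> \<epsilon>] e unfolding \<nu>_def by simp
        have enp: "0 < \<epsilon> ^ \<nu>" using e by simp
        have "norm (D \<epsilon> i j k) \<le> C * \<epsilon> ^ \<nu>" unfolding D_def using b(2)[OF enp] en e by auto
        also have "\<dots> \<le> \<bar>C\<bar> * \<epsilon> ^ \<nu>" using enp by (intro mult_right_mono) auto
        finally have nD: "norm (D \<epsilon> i j k) \<le> \<bar>C\<bar> * \<epsilon> ^ \<nu>" .
        have n1: "norm (Ut \<epsilon> $ i $ i') \<le> 1 / \<epsilon> ^ S" and n2: "norm (Ut \<epsilon> $ j $ j') \<le> 1 / \<epsilon> ^ S"
          and n3: "norm (matrix_inv (Ut \<epsilon>) $ k' $ k) \<le> 1 / \<epsilon> ^ S" using elim by auto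
        have "norm (Ut \<epsilon> $ i $ i' * Ut \<epsilon> $ j $ j' * matrix_inv (Ut \<epsilon>) $ k' $ k * D \<epsilon> i j k)
           = norm (Ut \<epsilon> $ i $ i') * norm (Ut \<epsilon> $ j $ j') * norm (matrix_inv (Ut \<epsilon>) $ k' $ k) * norm (D \<epsilon> i j k)"
          by (simp add: norm_mult)
        also have "\<dots> \<le> (1 / \<epsilon> ^ S) * (1 / \<epsilon> ^ S) * (1 / \<epsilon> ^ S) * (\<bar>C\<bar> * \<epsilon> ^ \<nu>)"
          by (intro mult_mono n1 n2 n3 nD mult_nonneg_nonneg) (use e in auto)
        also have "\<dots> = \<bar>C\<bar> * \<epsilon>"
        proof -
          have p: "\<epsilon> ^ \<nu> = \<epsilon>^S * \<epsilon>^S * \<epsilon>^S * \<epsilon>"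
            unfolding \<nu>_def by (simp add: numeral_3_eq_3 power_add mult_ac)
          have z: "\<epsilon> ^ S \<noteq> 0" using e by simp
          show ?thesis unfolding p using z by (simp add: field_simps)
        qed
        finally show ?case .
      qed
      moreover have "((\<lambda>\<epsilon>::real. \<bar>C\<bar> * \<epsilon>) \<longlongrightarrow> 0) (at_right 0)"
        using tendsto_mult_right_zero[OF tendsto_ident_at[of 0 "{0<..}"], of "\<bar>C\<bar>"] by simp
      ultimately show "((\<lambda>\<epsilon>. Ut \<epsilon> $ i $ i' * Ut \<epsilon> $ j $ j' * matrix_inv (Ut \<epsilon>) $ k' $ k * D \<epsilon> i j k) \<longlongrightarrow> 0) (at_right 0)"
        by (rule Lim_null_comparison)
    qed
    have "((\<lambda>\<epsilon>. ctr (Ut \<epsilon>) gh i' j' k' + ctr (Ut \<epsilon>) (D \<epsilon>) i' j' k') \<longlongrightarrow> gt i' j' k' + 0) (at_right 0)"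
      by (rule tendsto_add[OF l1 l2])
    then show "((\<lambda>\<epsilon>. ctr (Uh (\<epsilon> ^ \<nu>) ** Ut \<epsilon>) g i' j' k') \<longlongrightarrow> gt i' j' k') (at_right 0)"
      using tendsto_cong[OF eq] by simp
  qed
  then show ?thesis unfolding \<nu>_def by (intro exI[of _ "3 * S + 1"]) simp
qed

lemma GL_inv: "GL_path U \<Longrightarrow> \<forall>\<epsilon>\<in>{0<..1}. invertible (U \<epsilon>)"
  unfolding GL_path_def by (elim conjE)

theorem mainTheorem12:
  shows "(\<forall>(Uh::real \<Rightarrow> real^'n::finite^'n) Ut g gh gt.
            GL_path Uh \<and> GL_path Ut \<and> laurent_entries Uh \<and> laurent_entries Ut \<and>
            is_lie_structure g \<and> contracts Uh g gh \<and> contracts Ut gh gt \<longrightarrow>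
            (\<exists>\<nu>::nat. \<nu> > 0 \<and> contracts (\<lambda>\<epsilon>. Uh (\<epsilon> ^ \<nu>) ** Ut \<epsilon>) g gt))
       \<and> (\<forall>(Uh::real \<Rightarrow> complex^'n::finite^'n) Ut g gh gt.
            GL_path Uh \<and> GL_path Ut \<and> laurent_entries Uh \<and> laurent_entries Ut \<and>
            is_lie_structure g \<and> contracts Uh g gh \<and> contracts Ut gh gt \<longrightarrow>
            (\<exists>\<nu>::nat. \<nu> > 0 \<and> contracts (\<lambda>\<epsilon>. Uh (\<epsilon> ^ \<nu>) ** Ut \<epsilon>) g gt))"
proof (intro conjI allI impI)
  fix Uh Ut :: "real \<Rightarrow> real^'n^'n" and g gh gt
  assume "GL_path Uh \<and> GL_path Ut \<and> laurent_entries Uh \<and> laurent_entries Ut \<and>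
            is_lie_structure g \<and> contracts Uh g gh \<and> contracts Ut gh gt"
  then have h: "GL_path Uh" "GL_path Ut" "laurent_entries Uh" "laurent_entries Ut" "contracts Uh g gh" "contracts Ut gh gt"
    by simp_all
  show "\<exists>\<nu>::nat. \<nu> > 0 \<and> contracts (\<lambda>\<epsilon>. Uh (\<epsilon> ^ \<nu>) ** Ut \<epsilon>) g gt"
    by (rule main_generic[OF GL_inv[OF h(1)] GL_inv[OF h(2)] h(3) h(4) h(5) h(6)])
next
  fix Uh Ut :: "real \<Rightarrow> complex^'n^'n" and g gh gt
  assume "GL_path Uh \<and> GL_path Ut \<and> laurent_entries Uh \<and> laurent_entries Ut \<and>
            is_lie_structure g \<and> contracts Uh g gh \<and> contracts Ut gh gt"
  then have h: "GL_path Uh" "GL_path Ut" "laurent_entries Uh" "laurent_entries Ut" "contracts Uh g gh" "contracts Ut gh gt"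
    by simp_all
  show "\<exists>\<nu>::nat. \<nu> > 0 \<and> contracts (\<lambda>\<epsilon>. Uh (\<epsilon> ^ \<nu>) ** Ut \<epsilon>) g gt"
    by (rule main_generic[OF GL_inv[OF h(1)] GL_inv[OF h(2)] h(3) h(4) h(5) h(6)])
qed

end
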